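(* Let $m,n,w,d$ be positive integers with $1\le w\le m-1$, let $l$ be a positive integer dividing $n$ and $v$ an integer with $0\le v\le l$. Then $$A(m,n,w,d)\le\left(\frac{m}{w}\right)^{\frac{nv}{l}}\left(\frac{m}{m-w}\right)^{n-\frac{nv}{l}} A\left((m-1)l,\frac{n}{l},lw-v,d\right),$$ and $$A(m,n,w,d)\le\left(\frac{m^l}{\binom{l}{v}w^v(m-w)^{l-v}}\right)^{\frac{n}{l}} A\left((m-1)l,\frac{n}{l},lw-v,d-\frac{n}{l}\min\{v,l-v\}\right).$$
   Context: $J(m,w)$ denotes the set of binary vectors of length $m$ and Hamming weight $w$. Elements of $J(m,w)^n$ are identified with $m\times n$ binary matrices all of whose columns have weight $w$, with distance the binary Hamming distance. $A(m,n,w,d)$ denotes the maximum cardinality of a nonempty subset of $J(m,w)^n$ in which any two distinct elements are at Hamming distance at least $2d$ (for $d\le 0$ this equals $\binom{m}{w}^n$). *)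

theory Defs
  imports Complex_Main
begin

text \<open>Elements of J(m,w)^n, represented as m x n binary matrices
  (functions row -> column -> bool, False outside the m x n range),
  every column having exactly w ones.\<close>
definition cw_space :: "nat \<Rightarrow> nat \<Rightarrow> nat \<Rightarrow> (nat \<Rightarrow> nat \<Rightarrow> bool) set" where
  "cw_space m n w = {M. (\<forall>i j. M i j \<longrightarrow> i < m \<and> j < n) \<and>
                        (\<forall>j<n. card {i. i < m \<and> M i j} = w)}"

definition hdist :: "nat \<Rightarrow> nat \<Rightarrow> (nat \<Rightarrow> nat \<Rightarrow> bool) \<Rightarrow> (nat \<Rightarrow> nat \<Rightarrow> bool) \<Rightarrow> nat" where
  "hdist m n M N = card {(i, j). i < m \<and> j < n \<and> M i j \<noteq> N i j}"

definition A :: "nat \<Rightarrow> nat \<Rightarrow> nat \<Rightarrow> int \<Rightarrow> nat" where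
  "A m n w d = Max {card C | C. C \<subseteq> cw_space m n w \<and> C \<noteq> {} \<and>
      (\<forall>x\<in>C. \<forall>y\<in>C. x \<noteq> y \<longrightarrow> int (hdist m n x y) \<ge> 2 * d)}"

end

theory Submission
  imports Defs "HOL-Library.FuncSet"
begin


lemma sum_block: fixes F :: "nat \<Rightarrow> 'x::comm_monoid_add" shows "(\<Sum>i<b*a. F i) = (\<Sum>t<b. \<Sum>s<a. F (t*a+s)::'x::comm_monoid_add)"
proof -
  have "(\<Sum>i<b*a. F i) = (\<Sum>t<b. sum F {t*a..<t*a+a})" using sum.nat_group[of F a b] by simp
  also have "\<dots> = (\<Sum>t<b. \<Sum>s<a. F (t*a+s))"
    by (rule sum.cong[OF refl]) (simp add: sum.shift_bounds_nat_ivl[where k="t*a" for t, symmetric] atLeast0LessThan add.commute sum.atLeastLessThan_shift_0)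
  finally show ?thesis .
qed

lemma prod_block: fixes F :: "nat \<Rightarrow> 'x::comm_monoid_mult" shows "(\<Prod>i<b*a. F i) = (\<Prod>t<b. \<Prod>s<a. F (t*a+s)::'x::comm_monoid_mult)"
proof -
  have "(\<Prod>i<b*a. F i) = (\<Prod>t<b. prod F {t*a..<t*a+a})" using prod.nat_group[of F a b] by simp
  also have "\<dots> = (\<Prod>t<b. \<Prod>s<a. F (t*a+s))"
    by (rule prod.cong[OF refl]) (simp add: prod.atLeastLessThan_shift_0 atLeast0LessThan add.commute)
  finally show ?thesis .
qed

lemma card_ind: fixes a :: nat shows "card {i. i < a \<and> P i} = (\<Sum>i<a. if P i then 1 else 0)"
proof -
  have "(\<Sum>i<a. (of_bool (P i)::nat)) = card ({..<a} \<inter> {x. P x})" by (subst sum_of_bool_eq) auto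
  moreover have "{..<a} \<inter> {x. P x} = {i. i < a \<and> P i}" by auto
  ultimately show ?thesis by (simp add: of_bool_def)
qed

lemma card_pairs: fixes a b :: nat shows "card {(i,j). i < a \<and> j < b \<and> P i j} = (\<Sum>j<b. card {i. i < a \<and> P i j})"
proof -
  have "{(i,j). i < a \<and> j < b \<and> P i j} = (\<Union>j<b. (\<lambda>i. (i,j)) ` {i. i < a \<and> P i j})" by auto
  moreover have "card (\<Union>j<b. (\<lambda>i. (i,j)) ` {i. i < a \<and> P i j}) = (\<Sum>j<b. card ((\<lambda>i. (i,j)) ` {i. i < a \<and> P i j}))"
    by (rule card_UN_disjoint) auto
  moreover have "\<And>j. card ((\<lambda>i. (i,j)) ` {i. i < a \<and> P i j}) = card {i. i < a \<and> P i j}"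
    by (rule card_image) (auto simp: inj_on_def)
  ultimately show ?thesis by simp
qed

definition sk :: "nat \<Rightarrow> nat \<Rightarrow> nat" where "sk s r = (if s < r then s else Suc s)"

lemma skip_card:
  assumes "r < m"
  shows "card {i. i < m \<and> P i} = card {s. s < m - 1 \<and> P (sk s r)} + (if P r then 1 else 0)"
proof -
  have inj: "inj_on (\<lambda>s. sk s r) {s. s < m - 1 \<and> P (sk s r)}" by (auto simp: inj_on_def sk_def split: if_splits)
  have img: "(\<lambda>s. sk s r) ` {s. s < m - 1 \<and> P (sk s r)} = {i. i < m \<and> P i \<and> i \<noteq> r}"
  proof (rule set_eqI, rule iffI)
    fix x assume "x \<in> {i. i < m \<and> P i \<and> i \<noteq> r}"
    then show "x \<in> (\<lambda>s. sk s r) ` {s. s < m - 1 \<and> P (sk s r)}" using assms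
      apply (cases "x < r")
      apply (rule image_eqI[of _ _ x]) apply (auto simp: sk_def)[2]
      apply (rule image_eqI[of _ _ "x - 1"]) apply (auto simp: sk_def)
      done
  qed (use assms in \<open>auto simp: sk_def\<close>)
  have "card {i. i < m \<and> P i \<and> i \<noteq> r} = card {s. s < m - 1 \<and> P (sk s r)}"
    using card_image[OF inj] img by simp
  moreover have "card {i. i < m \<and> P i} = card {i. i < m \<and> P i \<and> i \<noteq> r} + (if P r then 1 else 0)"
  proof (cases "P r")
    case True
    then have "{i. i < m \<and> P i} = insert r {i. i < m \<and> P i \<and> i \<noteq> r}" using assms by auto
    then show ?thesis using True by simp
  next
    case False
    then have "{i. i < m \<and> P i} = {i. i < m \<and> P i \<and> i \<noteq> r}" by auto
    then show ?thesis using False by simp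
  qed
  ultimately show ?thesis by simp
qed

lemma sk_lt: "s < m - 1 \<Longrightarrow> r < m \<Longrightarrow> sk s r < m" by (auto simp: sk_def)

lemma sk_cover: "r < m \<Longrightarrow> i < m \<Longrightarrow> i \<noteq> r \<Longrightarrow> \<exists>s < m - 1. sk s r = i"
  apply (cases "i < r")
  apply (rule exI[of _ i]) apply (auto simp: sk_def)[1]
  apply (rule exI[of _ "i - 1"]) apply (auto simp: sk_def)
  done


lemma pf_block:
  fixes a l :: nat
  assumes "0 < a"
  shows "card {i. i < a*l \<and> Q (i mod a) (i div a)} = (\<Sum>t<l. card {s. s < a \<and> Q s t})"
proof -
  have "card {i. i < a*l \<and> Q (i mod a) (i div a)} = (\<Sum>i<l*a. if Q (i mod a) (i div a) then 1 else 0)"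
    by (simp add: card_ind mult.commute)
  also have "\<dots> = (\<Sum>t<l. \<Sum>s<a. if Q ((t*a+s) mod a) ((t*a+s) div a) then 1 else 0)"
    by (rule sum_block)
  also have "\<dots> = (\<Sum>t<l. \<Sum>s<a. if Q s t then 1 else 0)"
    using assms by (intro sum.cong refl) simp
  also have "\<dots> = (\<Sum>t<l. card {s. s < a \<and> Q s t})" by (simp add: card_ind)
  finally show ?thesis .
qed

lemma idx_lt: "g < (k::nat) \<Longrightarrow> t < l \<Longrightarrow> g*l+t < k*l"
proof -
  assume "g < k" "t < l"
  then have "g*l + t < g*l + l" by simp
  also have "\<dots> = Suc g * l" by simp
  also have "\<dots> \<le> k*l" using \<open>g<k\<close> by (intro mult_le_mono1) simp
  finally show ?thesis .
qed

definition pf :: "nat \<Rightarrow> nat \<Rightarrow> nat \<Rightarrow> (nat \<Rightarrow> nat) \<Rightarrow> (nat \<Rightarrow> nat \<Rightarrow> bool) \<Rightarrow> nat \<Rightarrow> nat \<Rightarrow> bool" where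
  "pf m l k r M = (\<lambda>i g. i < (m-1)*l \<and> g < k \<and>
      M (sk (i mod (m-1)) (r (g*l + i div (m-1)))) (g*l + i div (m-1)))"

lemma pf_count:
  assumes "2 \<le> m" "g < k"
  shows "card {i. i < (m-1)*l \<and> P (pf m l k r M i g) (pf m l k r M' i g)} =
    (\<Sum>t<l. card {s. s < m - 1 \<and> P (M (sk s (r (g*l+t))) (g*l+t)) (M' (sk s (r (g*l+t))) (g*l+t))})"
proof -
  define Q where "Q s t = P (M (sk s (r (g*l+t))) (g*l+t)) (M' (sk s (r (g*l+t))) (g*l+t))" for s t
  have 1: "{i. i < (m-1)*l \<and> P (pf m l k r M i g) (pf m l k r M' i g)} =
        {i. i < (m-1)*l \<and> Q (i mod (m-1)) (i div (m-1))}"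
  proof (rule Collect_cong)
    fix i
    show "(i < (m-1)*l \<and> P (pf m l k r M i g) (pf m l k r M' i g)) =
       (i < (m-1)*l \<and> Q (i mod (m-1)) (i div (m-1)))"
    proof (cases "i < (m-1)*l")
      case True
      then have "pf m l k r M i g = M (sk (i mod (m-1)) (r (g*l + i div (m-1)))) (g*l + i div (m-1))"
       "pf m l k r M' i g = M' (sk (i mod (m-1)) (r (g*l + i div (m-1)))) (g*l + i div (m-1))"
        using assms(2) unfolding pf_def by simp_all
      then show ?thesis unfolding Q_def using True by simp
    qed simp
  qed
  have 2: "card {i. i < (m-1)*l \<and> Q (i mod (m-1)) (i div (m-1))} = (\<Sum>t<l. card {s. s < m - 1 \<and> Q s t})"
    by (rule pf_block) (use assms in simp)
  show ?thesis unfolding 1 2 unfolding Q_def by (rule refl)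
qed

lemma hdist_pf:
  assumes "2 \<le> m" "n = k*l" "\<forall>j<n. r j < m"
  shows "hdist m n M M' = hdist ((m-1)*l) k (pf m l k r M) (pf m l k r M') +
     (\<Sum>g<k. card {t. t < l \<and> M (r (g*l+t)) (g*l+t) \<noteq> M' (r (g*l+t)) (g*l+t)})"
proof -
  define F where "F j = card {s. s < m - 1 \<and> M (sk s (r j)) j \<noteq> M' (sk s (r j)) j}" for j
  define G where "G j = (if M (r j) j \<noteq> M' (r j) j then 1 else (0::nat))" for j
  have "hdist m n M M' = (\<Sum>j<n. card {i. i < m \<and> M i j \<noteq> M' i j})"
    unfolding hdist_def by (rule card_pairs)
  also have "\<dots> = (\<Sum>j<n. F j + G j)"
  proof (intro sum.cong refl)
    fix j assume "j \<in> {..<n}"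
    then have "r j < m" using assms(3) by simp
    from skip_card[OF this, of "\<lambda>i. M i j \<noteq> M' i j"]
    show "card {i. i < m \<and> M i j \<noteq> M' i j} = F j + G j" unfolding F_def G_def by simp
  qed
  also have "\<dots> = (\<Sum>g<k. \<Sum>t<l. F (g*l+t) + G (g*l+t))"
    unfolding assms(2) by (rule sum_block)
  also have "\<dots> = (\<Sum>g<k. \<Sum>t<l. F (g*l+t)) + (\<Sum>g<k. \<Sum>t<l. G (g*l+t))"
    by (simp add: sum.distrib)
  also have "(\<Sum>g<k. \<Sum>t<l. F (g*l+t)) = hdist ((m-1)*l) k (pf m l k r M) (pf m l k r M')"
  proof -
    have "hdist ((m-1)*l) k (pf m l k r M) (pf m l k r M') =
       (\<Sum>g<k. card {i. i < (m-1)*l \<and> pf m l k r M i g \<noteq> pf m l k r M' i g})"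
      unfolding hdist_def by (rule card_pairs)
    also have "\<dots> = (\<Sum>g<k. \<Sum>t<l. F (g*l+t))"
    proof (intro sum.cong refl)
      fix g assume "g \<in> {..<k}"
      then have "g < k" by simp
      from pf_count[OF assms(1) this, where P="\<lambda>x y. x \<noteq> y" and l=l and r=r and M=M and M'=M']
      show "card {i. i < (m-1)*l \<and> pf m l k r M i g \<noteq> pf m l k r M' i g} = (\<Sum>t<l. F (g*l+t))"
        unfolding F_def by simp
    qed
    finally show ?thesis by simp
  qed
  also have "(\<Sum>g<k. \<Sum>t<l. G (g*l+t)) = (\<Sum>g<k. card {t. t < l \<and> M (r (g*l+t)) (g*l+t) \<noteq> M' (r (g*l+t)) (g*l+t)})"
    by (simp add: card_ind G_def)
  finally show ?thesis .
qed

lemma pf_in: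
  assumes "2 \<le> m" "n = k*l" "\<forall>j<n. r j < m" "M \<in> cw_space m n w" "1 \<le> w"
    "\<forall>g<k. card {t. t < l \<and> M (r (g*l+t)) (g*l+t)} = v"
  shows "pf m l k r M \<in> cw_space ((m-1)*l) k (l*w - v)"
proof -
  have sup: "\<forall>i g. pf m l k r M i g \<longrightarrow> i < (m-1)*l \<and> g < k" by (simp add: pf_def)
  have col: "card {i. i < (m-1)*l \<and> pf m l k r M i g} = l*w - v" if "g<k" for g
  proof -
    have "card {i. i < (m-1)*l \<and> pf m l k r M i g} = (\<Sum>t<l. card {s. s<m-1 \<and> M (sk s (r (g*l+t))) (g*l+t)})"
      using pf_count[OF assms(1) that, where P="\<lambda>x y. x" and M'=M and r=r and l=l] by simp
    also have "\<dots> = (\<Sum>t<l. w - (if M (r (g*l+t)) (g*l+t) then 1 else 0))"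
    proof (intro sum.cong refl)
      fix t assume "t \<in> {..<l}"
      then have j: "g*l+t < n" using idx_lt[OF that] assms(2) by simp
      then have "r (g*l+t) < m" using assms(3) by simp
      from skip_card[OF this, where P="\<lambda>i. M i (g*l+t)"]
      have "card {i. i<m \<and> M i (g*l+t)} = card{s. s<m-1 \<and> M (sk s (r (g*l+t))) (g*l+t)} + (if M (r (g*l+t)) (g*l+t) then 1 else 0)" .
      moreover have "card {i. i<m \<and> M i (g*l+t)} = w" using assms(4) j unfolding cw_space_def by auto
      ultimately show "card{s. s<m-1 \<and> M (sk s (r (g*l+t))) (g*l+t)} = w - (if M (r (g*l+t)) (g*l+t) then 1 else 0)"
        by simp
    qed
    also have "\<dots> = (\<Sum>t<l. w) - (\<Sum>t<l. if M (r (g*l+t)) (g*l+t) then 1 else 0)"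
      by (rule sum_subtractf_nat) (use assms(5) in simp)
    also have "\<dots> = l*w - v" using assms(6) that by (simp add: card_ind[symmetric])
    finally show ?thesis .
  qed
  show ?thesis unfolding cw_space_def using sup col by blast
qed

lemma pf_inj:
  assumes "2 \<le> m" "n = k*l" "\<forall>j<n. r j < m" "M \<in> cw_space m n w" "M' \<in> cw_space m n w"
    "pf m l k r M = pf m l k r M'"
  shows "M = M'"
proof (rule ext, rule ext)
  fix i j
  show "M i j = M' i j"
  proof (cases "i < m \<and> j < n")
    case False
    then show ?thesis using assms(4,5) unfolding cw_space_def by blast
  next
    case True
    then have "0 < l" using assms(2) by (cases l) auto
    define g where "g = j div l"
    define t where "t = j mod l"
    have jgt: "j = g*l + t" unfolding g_def t_def by simp
    have tl: "t < l" unfolding t_def using \<open>0 < l\<close> by simp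
    have gk: "g < k" unfolding g_def using True assms(2) by (simp add: less_mult_imp_div_less)
    have rj: "r j < m" using True assms(3) by simp
    have eqs: "M (sk s (r j)) j = M' (sk s (r j)) j" if "s < m-1" for s
    proof -
      define i' where "i' = t*(m-1)+s"
      have i'lt: "i' < (m-1)*l" unfolding i'_def using idx_lt[OF tl that] by (simp add: mult.commute)
      have md: "i' mod (m-1) = s" "i' div (m-1) = t" unfolding i'_def using that by auto
      have e: "pf m l k r M i' g = pf m l k r M' i' g" using assms(6) by simp
      have "pf m l k r M i' g = M (sk s (r j)) j" "pf m l k r M' i' g = M' (sk s (r j)) j"
        using i'lt gk unfolding pf_def md jgt[symmetric] by simp_all
      then show ?thesis using e by simp
    qed
    have c1: "card {i. i<m \<and> M i j} = w" "card {i. i<m \<and> M' i j} = w"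
      using assms(4,5) True unfolding cw_space_def by auto
    have "{s. s<m-1 \<and> M (sk s (r j)) j} = {s. s<m-1 \<and> M' (sk s (r j)) j}" using eqs by auto
    then have "(if M (r j) j then 1 else 0) = (if M' (r j) j then 1 else (0::nat))"
      using skip_card[OF rj, where P="\<lambda>i. M i j"] skip_card[OF rj, where P="\<lambda>i. M' i j"] c1
      by simp
    then have bit: "M (r j) j = M' (r j) j" by (simp split: if_splits)
    show ?thesis
    proof (cases "i = r j")
      case True then show ?thesis using bit by simp
    next
      case False
      then obtain s where "s < m-1" "sk s (r j) = i" using sk_cover[OF rj] \<open>i < m \<and> j < n\<close> by blast
      then show ?thesis using eqs by blast
    qed
  qed
qed



lemma cw_finite: "finite (cw_space m n w)"
proof -
  have "cw_space m n w \<subseteq> (\<lambda>S i j. (i,j) \<in> S) ` Pow ({..<m} \<times> {..<n})"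
  proof
    fix M assume "M \<in> cw_space m n w"
    then have sup: "\<forall>i j. M i j \<longrightarrow> i < m \<and> j < n" unfolding cw_space_def by simp
    have "{(i,j). M i j} \<subseteq> {..<m} \<times> {..<n}"
    proof (rule subsetI)
      fix p assume "p \<in> {(i,j). M i j}"
      then obtain i j where "p = (i,j)" "M i j" by blast
      then show "p \<in> {..<m} \<times> {..<n}" using sup by simp
    qed
    then have "{(i,j). M i j} \<in> Pow ({..<m} \<times> {..<n})" by simp
    moreover have "M = (\<lambda>i j. (i,j) \<in> {(i,j). M i j})" by simp
    ultimately show "M \<in> (\<lambda>S i j. (i,j) \<in> S) ` Pow ({..<m} \<times> {..<n})" by blast
  qed
  then show ?thesis by (rule finite_subset) simp
qed

lemma fin_cards: "finite {card C | C. C \<subseteq> cw_space m n w \<and> Q C}"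
proof (rule finite_subset[of _ "card ` Pow (cw_space m n w)"])
  show "{card C | C. C \<subseteq> cw_space m n w \<and> Q C} \<subseteq> card ` Pow (cw_space m n w)" by blast
  show "finite (card ` Pow (cw_space m n w))" using cw_finite by simp
qed

lemma A_ge:
  assumes "C \<subseteq> cw_space m n w" "C \<noteq> {}" "\<forall>x\<in>C. \<forall>y\<in>C. x \<noteq> y \<longrightarrow> int (hdist m n x y) \<ge> 2 * d"
  shows "card C \<le> A m n w d"
proof -
  have "card C \<in> {card C | C. C \<subseteq> cw_space m n w \<and> C \<noteq> {} \<and>
      (\<forall>x\<in>C. \<forall>y\<in>C. x \<noteq> y \<longrightarrow> int (hdist m n x y) \<ge> 2 * d)}"
    using assms by (intro CollectI exI[where x=C] conjI refl)
  then show ?thesis unfolding A_def by (rule Max_ge[OF fin_cards])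
qed

lemma A_ach:
  assumes "w \<le> m"
  shows "\<exists>C. C \<subseteq> cw_space m n w \<and> C \<noteq> {} \<and>
      (\<forall>x\<in>C. \<forall>y\<in>C. x \<noteq> y \<longrightarrow> int (hdist m n x y) \<ge> 2 * d) \<and> card C = A m n w d"
proof -
  let ?S = "{card C | C. C \<subseteq> cw_space m n w \<and> C \<noteq> {} \<and>
      (\<forall>x\<in>C. \<forall>y\<in>C. x \<noteq> y \<longrightarrow> int (hdist m n x y) \<ge> 2 * d)}"
  define M0 where "M0 = (\<lambda>i j. i < w \<and> j < n)"
  have "M0 \<in> cw_space m n w" unfolding cw_space_def mem_Collect_eq
  proof (rule conjI)
    show "\<forall>i j. M0 i j \<longrightarrow> i < m \<and> j < n" using assms unfolding M0_def by simp
  next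
    show "\<forall>j<n. card {i. i < m \<and> M0 i j} = w"
    proof (intro allI impI)
    fix j assume "j < n"
    then have "{i. i < m \<and> M0 i j} = {..<w}" using assms unfolding M0_def by auto
    then show "card {i. i < m \<and> M0 i j} = w" by simp
    qed
  qed
  then have F: "{M0} \<subseteq> cw_space m n w \<and> {M0} \<noteq> {} \<and>
      (\<forall>x\<in>{M0}. \<forall>y\<in>{M0}. x \<noteq> y \<longrightarrow> int (hdist m n x y) \<ge> 2 * d)" by simp
  have "card {M0} \<in> ?S"
    apply (rule CollectI, rule exI[where x="{M0}"]) by (rule conjI[OF refl F])
  then have "?S \<noteq> {}" by (rule ex_in_conv[THEN iffD1, OF exI])
  have "A m n w d \<in> ?S" unfolding A_def by (rule Max_in[OF fin_cards \<open>?S \<noteq> {}\<close>])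
  then obtain C where "A m n w d = card C" "C \<subseteq> cw_space m n w \<and> C \<noteq> {} \<and>
      (\<forall>x\<in>C. \<forall>y\<in>C. x \<noteq> y \<longrightarrow> int (hdist m n x y) \<ge> 2 * d)"
    unfolding mem_Collect_eq by (elim exE conjE) (rule that, assumption, intro conjI)
  then show ?thesis by metis
qed


lemma card_filter: "finite X \<Longrightarrow> card {x\<in>X. Q x} = (\<Sum>x\<in>X. if Q x then 1 else 0)"
  unfolding card_eq_sum by (rule sum.inter_filter[where g="\<lambda>_. 1"])

lemma prod_pat:
  fixes x y :: nat
  assumes "\<forall>g<k. S g \<subseteq> {..<l} \<and> card (S g) = v"
  shows "(\<Prod>j<k*l. if (j mod l) \<in> S (j div l) then x else y) = (x^v * y^(l-v))^k"
proof -
  have "(\<Prod>j<k*l. if (j mod l) \<in> S (j div l) then x else y) =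
     (\<Prod>g<k. \<Prod>t<l. if ((g*l+t) mod l) \<in> S ((g*l+t) div l) then x else y)" by (rule prod_block)
  also have "\<dots> = (\<Prod>g<k. x^v * y^(l-v))"
  proof (rule prod.cong[OF refl])
    fix g assume g: "g \<in> {..<k}"
    have "(\<Prod>t<l. if ((g*l+t) mod l) \<in> S ((g*l+t) div l) then x else y) = (\<Prod>t<l. if t \<in> S g then x else y)"
      by (rule prod.cong[OF refl]) simp
    also have "\<dots> = (\<Prod>t\<in>{..<l} \<inter> {t. t \<in> S g}. x) * (\<Prod>t\<in>{..<l} \<inter> - {t. t \<in> S g}. y)"
      by (rule prod.If_cases) simp
    also have "{..<l} \<inter> {t. t \<in> S g} = S g" using assms g by auto
    also have "{..<l} \<inter> - {t. t \<in> S g} = {..<l} - S g" by auto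
    finally have *: "(\<Prod>t<l. if ((g*l+t) mod l) \<in> S ((g*l+t) div l) then x else y) = (\<Prod>t\<in>S g. x) * (\<Prod>t\<in>{..<l} - S g. y)" .
    have sg: "S g \<subseteq> {..<l}" "card (S g) = v" using assms g by auto
    then have "finite (S g)" using finite_subset by blast
    then have "card ({..<l} - S g) = l - v" using sg by (simp add: card_Diff_subset)
    with * show "(\<Prod>t<l. if ((g*l+t) mod l) \<in> S ((g*l+t) div l) then x else y) = x^v * y^(l-v)"
      using assms g by simp
  qed
  also have "\<dots> = (x^v * y^(l-v))^k" by simp
  finally show ?thesis .
qed


lemma sym_diff_bound:
  assumes "X \<subseteq> {..<l}" "Y \<subseteq> {..<l}" "card X = v" "card Y = v"
  shows "card {t. t < l \<and> (t \<in> X) \<noteq> (t \<in> Y)} \<le> 2 * min v (l - v)"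
proof -
  have fX: "finite X" "finite Y" using assms(1,2) finite_subset by auto
  have eq: "{t. t < l \<and> (t \<in> X) \<noteq> (t \<in> Y)} = (X - Y) \<union> (Y - X)" using assms(1,2) by auto
  have c1: "card (X - Y) = v - card (X \<inter> Y)" using fX assms(3) by (simp add: card_Diff_subset_Int)
  have c2: "card (Y - X) = v - card (X \<inter> Y)" using fX assms(4) by (simp add: card_Diff_subset_Int Int_commute)
  have "card (X - Y) \<le> card ({..<l} - Y)" using assms(1) by (intro card_mono) auto
  also have "card ({..<l} - Y) = l - v" using assms(2,4) fX by (subst card_Diff_subset) auto
  finally have c3: "card (X - Y) \<le> l - v" .
  have "card {t. t < l \<and> (t \<in> X) \<noteq> (t \<in> Y)} = card (X - Y) + card (Y - X)"
    unfolding eq using fX by (subst card_Un_disjoint) auto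
  moreover have e: "card (Y - X) = card (X - Y)" using c1 c2 by simp
  moreover have "card (X - Y) \<le> v" using assms(3) fX by (metis card_mono Diff_subset)
  ultimately show ?thesis using c3 unfolding min_def by (simp split: if_splits)
qed



lemma avg:
  assumes "C \<subseteq> cw_space m n w" "w \<le> m"
  shows "(\<Sum>r\<in>PiE {..<n} (\<lambda>_. {..<m}). card {M\<in>C. \<forall>j<n. M (r j) j = b j}) =
     card C * (\<Prod>j<n. if b j then w else m - w)"
proof -
  have finC: "finite C" using assms(1) cw_finite finite_subset by blast
  have finR: "finite (PiE {..<n} (\<lambda>_. {..<m}))" by (simp add: finite_PiE)
  have "(\<Sum>r\<in>PiE {..<n} (\<lambda>_. {..<m}). card {M\<in>C. \<forall>j<n. M (r j) j = b j}) =
     (\<Sum>r\<in>PiE {..<n} (\<lambda>_. {..<m}). \<Sum>M\<in>C. if (\<forall>j<n. M (r j) j = b j) then 1 else 0)"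
    by (rule sum.cong[OF refl], rule card_filter[OF finC])
  also have "\<dots> = (\<Sum>M\<in>C. \<Sum>r\<in>PiE {..<n} (\<lambda>_. {..<m}). if (\<forall>j<n. M (r j) j = b j) then 1 else 0)"
    by (rule sum.swap)
  also have "\<dots> = (\<Sum>M\<in>C. (\<Prod>j<n. if b j then w else m - w))"
  proof (rule sum.cong[OF refl])
    fix M assume "M \<in> C"
    then have MC: "M \<in> cw_space m n w" using assms(1) by blast
    have "(\<Sum>r\<in>PiE {..<n} (\<lambda>_. {..<m}). if (\<forall>j<n. M (r j) j = b j) then 1 else 0) =
        card {r\<in>PiE {..<n} (\<lambda>_. {..<m}). \<forall>j<n. M (r j) j = b j}"
      by (rule card_filter[OF finR, symmetric])
    also have "{r\<in>PiE {..<n} (\<lambda>_. {..<m}). \<forall>j<n. M (r j) j = b j} = PiE {..<n} (\<lambda>j. {i. i < m \<and> M i j = b j})"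
      by (auto simp: PiE_def Pi_def)
    also have "card \<dots> = (\<Prod>j<n. card {i. i < m \<and> M i j = b j})" by (simp add: card_PiE)
    also have "\<dots> = (\<Prod>j<n. if b j then w else m - w)"
    proof (rule prod.cong[OF refl])
      fix j assume "j \<in> {..<n}"
      then have cw: "card {i. i < m \<and> M i j} = w" using MC unfolding cw_space_def by auto
      show "card {i. i < m \<and> M i j = b j} = (if b j then w else m - w)"
      proof (cases "b j")
        case True then show ?thesis using cw by simp
      next
        case False
        have "{i. i < m \<and> M i j = b j} = {..<m} - {i. i < m \<and> M i j}" using False by auto
        moreover have "card ({..<m} - {i. i < m \<and> M i j}) = m - w"
          by (subst card_Diff_subset) (auto simp: cw)
        ultimately show ?thesis using False by simp
      qed
    qed
    finally show "(\<Sum>r\<in>PiE {..<n} (\<lambda>_. {..<m}). if (\<forall>j<n. M (r j) j = b j) then 1 else 0) =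
        (\<Prod>j<n. if b j then w else m - w)" .
  qed
  also have "\<dots> = card C * (\<Prod>j<n. if b j then w else m - w)" by simp
  finally show ?thesis .
qed



locale setting =
  fixes m n w k l v :: nat and d :: int and C :: "(nat \<Rightarrow> nat \<Rightarrow> bool) set"
  assumes m2: "2 \<le> m" and nkl: "n = k*l" and w1: "1 \<le> w" and wm: "w < m" and vl: "v \<le> l"
    and Csub: "C \<subseteq> cw_space m n w"
    and Cdist: "\<forall>x\<in>C. \<forall>y\<in>C. x \<noteq> y \<longrightarrow> int (hdist m n x y) \<ge> 2*d"
begin

definition RR where "RR = PiE {..<n} (\<lambda>_. {..<m})"
definition CS where "CS r S = {M\<in>C. \<forall>j<n. M (r j) j = (j mod l \<in> S (j div l))}"
definition good where "good S \<longleftrightarrow> (\<forall>g<k. S g \<subseteq> {..<l} \<and> card (S g) = v)"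

lemma RR_lt: "r \<in> RR \<Longrightarrow> \<forall>j<n. r j < m"
  unfolding RR_def by (auto dest: PiE_mem)

lemma finC: "finite C" using Csub cw_finite finite_subset by blast

lemma CS_bit:
  assumes "M \<in> CS r S" "g < k" "t < l"
  shows "M (r (g*l+t)) (g*l+t) = (t \<in> S g)"
proof -
  have j: "g*l+t < n" using idx_lt[OF assms(2,3)] nkl by simp
  have "(g*l+t) mod l = t" "(g*l+t) div l = g" using assms(3) by auto
  then show ?thesis using assms(1) j unfolding CS_def by auto
qed

lemma CS_set:
  assumes "good S" "M \<in> CS r S" "g < k"
  shows "{t. t < l \<and> M (r (g*l+t)) (g*l+t)} = S g"
proof -
  have "S g \<subseteq> {..<l}" using assms(1,3) unfolding good_def by blast
  then show ?thesis using CS_bit[OF assms(2,3)] by auto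
qed

lemma code_bound:
  assumes "r \<in> RR" "\<forall>S\<in>SS. good S"
    "\<forall>S\<in>SS. \<forall>S'\<in>SS. \<forall>g<k. card {t. t < l \<and> (t \<in> S g) \<noteq> (t \<in> S' g)} \<le> 2*\<delta>"
  shows "card (\<Union>S\<in>SS. CS r S) \<le> A ((m-1)*l) k (l*w - v) (d - int k * int \<delta>)"
proof (cases "(\<Union>S\<in>SS. CS r S) = {}")
  case True then show ?thesis by simp
next
  case False
  define U where "U = (\<Union>S\<in>SS. CS r S)"
  have rlt: "\<forall>j<n. r j < m" using RR_lt assms(1) by blast
  have UC: "U \<subseteq> C" unfolding U_def CS_def by blast
  then have Usub: "U \<subseteq> cw_space m n w" using Csub by blast
  have inj: "inj_on (pf m l k r) U"
  proof (rule inj_onI)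
    fix M M' assume "M \<in> U" "M' \<in> U" "pf m l k r M = pf m l k r M'"
    then show "M = M'" using pf_inj[OF m2 nkl rlt] Usub by blast
  qed
  have img: "pf m l k r ` U \<subseteq> cw_space ((m-1)*l) k (l*w - v)"
  proof
    fix x assume "x \<in> pf m l k r ` U"
    then obtain M S where M: "x = pf m l k r M" "S \<in> SS" "M \<in> CS r S" unfolding U_def by blast
    have "good S" using M(2) assms(2) by blast
    then have "\<forall>g<k. card {t. t < l \<and> M (r (g*l+t)) (g*l+t)} = v"
      using CS_set[OF _ M(3)] unfolding good_def by auto
    moreover have "M \<in> cw_space m n w" using M(2,3) Usub unfolding U_def by blast
    ultimately show "x \<in> cw_space ((m-1)*l) k (l*w - v)"
      using pf_in[OF m2 nkl rlt _ w1] M(1) by blast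
  qed
  have dist: "\<forall>x\<in>pf m l k r ` U. \<forall>y\<in>pf m l k r ` U. x \<noteq> y \<longrightarrow>
      int (hdist ((m-1)*l) k x y) \<ge> 2 * (d - int k * int \<delta>)"
  proof (intro ballI impI)
    fix x y assume x: "x \<in> pf m l k r ` U" and y: "y \<in> pf m l k r ` U" and xy: "x \<noteq> y"
    obtain M S where M: "x = pf m l k r M" "S \<in> SS" "M \<in> CS r S" using x unfolding U_def by blast
    obtain M' S' where M': "y = pf m l k r M'" "S' \<in> SS" "M' \<in> CS r S'" using y unfolding U_def by blast
    have "M \<noteq> M'" using xy M(1) M'(1) by blast
    moreover have "M \<in> C" "M' \<in> C" using M(3) M'(3) unfolding CS_def by auto
    ultimately have big: "int (hdist m n M M') \<ge> 2*d" using Cdist by blast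
    define D where "D = (\<Sum>g<k. card {t. t < l \<and> M (r (g*l+t)) (g*l+t) \<noteq> M' (r (g*l+t)) (g*l+t)})"
    have hd: "hdist m n M M' = hdist ((m-1)*l) k x y + D"
      using hdist_pf[OF m2 nkl rlt, of M M'] M(1) M'(1) unfolding D_def by simp
    have "D = (\<Sum>g<k. card {t. t < l \<and> (t \<in> S g) \<noteq> (t \<in> S' g)})"
      unfolding D_def
    proof (rule sum.cong[OF refl])
      fix g assume "g \<in> {..<k}"
      then have "g < k" by simp
      then have "{t. t < l \<and> M (r (g*l+t)) (g*l+t) \<noteq> M' (r (g*l+t)) (g*l+t)} =
          {t. t < l \<and> (t \<in> S g) \<noteq> (t \<in> S' g)}"
        using CS_bit[OF M(3)] CS_bit[OF M'(3)] by auto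
      then show "card {t. t < l \<and> M (r (g*l+t)) (g*l+t) \<noteq> M' (r (g*l+t)) (g*l+t)} =
          card {t. t < l \<and> (t \<in> S g) \<noteq> (t \<in> S' g)}" by simp
    qed
    also have "\<dots> \<le> of_nat (card {..<k}) * (2*\<delta>)"
      by (rule sum_bounded_above) (use assms(3) M(2) M'(2) in auto)
    finally have "D \<le> k * (2*\<delta>)" by simp
    then have "int D \<le> int (k * (2*\<delta>))" by (simp only: of_nat_le_iff)
    also have "int (k * (2*\<delta>)) = int k * (2 * int \<delta>)" by simp
    finally have Dle: "int D \<le> int k * (2 * int \<delta>)" .
    have "int (hdist m n M M') = int (hdist ((m-1)*l) k x y) + int D" using hd by simp
    then show "int (hdist ((m-1)*l) k x y) \<ge> 2 * (d - int k * int \<delta>)"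
      using big Dle by (simp add: algebra_simps)
  qed
  have "card U = card (pf m l k r ` U)" using card_image[OF inj] by simp
  also have "\<dots> \<le> A ((m-1)*l) k (l*w - v) (d - int k * int \<delta>)"
    by (rule A_ge[OF img _ dist]) (use False U_def in simp)
  finally show ?thesis unfolding U_def .
qed

end



context setting
begin

lemma count_CS:
  assumes "good S"
  shows "(\<Sum>r\<in>RR. card (CS r S)) = card C * (w^v * (m-w)^(l-v))^k"
proof -
  have "(\<Sum>r\<in>RR. card (CS r S)) = (\<Sum>r\<in>PiE {..<n} (\<lambda>_. {..<m}). card {M\<in>C. \<forall>j<n. M (r j) j = (j mod l \<in> S (j div l))})"
    unfolding RR_def CS_def by simp
  also have "\<dots> = card C * (\<Prod>j<n. if (j mod l \<in> S (j div l)) then w else m - w)"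
    by (rule avg[OF Csub]) (use wm in simp)
  also have "(\<Prod>j<n. if (j mod l \<in> S (j div l)) then w else m - w) = (w^v * (m-w)^(l-v))^k"
    unfolding nkl by (rule prod_pat) (use assms in \<open>simp add: good_def\<close>)
  finally show ?thesis .
qed

lemma card_RR: "card RR = m^n"
  unfolding RR_def by (simp add: card_PiE)

lemma finRR: "finite RR"
  unfolding RR_def by (simp add: finite_PiE)

lemma bound1: "card C * (w^v * (m-w)^(l-v))^k \<le> m^n * A ((m-1)*l) k (l*w - v) d"
proof -
  define S0 where "S0 = (\<lambda>g::nat. {..<v})"
  have g0: "good S0" unfolding good_def S0_def using vl by auto
  have "card C * (w^v * (m-w)^(l-v))^k = (\<Sum>r\<in>RR. card (CS r S0))" using count_CS[OF g0] by simp
  also have "\<dots> \<le> (\<Sum>r\<in>RR. A ((m-1)*l) k (l*w - v) d)"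
  proof (rule sum_mono)
    fix r assume r: "r \<in> RR"
    have "card (\<Union>S\<in>{S0}. CS r S) \<le> A ((m-1)*l) k (l*w - v) (d - int k * int 0)"
      by (rule code_bound[OF r]) (use g0 in simp_all)
    then show "card (CS r S0) \<le> A ((m-1)*l) k (l*w - v) d" by simp
  qed
  also have "\<dots> = m^n * A ((m-1)*l) k (l*w - v) d" using card_RR by simp
  finally show ?thesis .
qed

lemma bound2: "card C * ((l choose v)^k * (w^v * (m-w)^(l-v))^k) \<le>
    m^n * A ((m-1)*l) k (l*w - v) (d - int k * int (min v (l - v)))"
proof -
  define SS where "SS = PiE {..<k} (\<lambda>_. {X. X \<subseteq> {..<l} \<and> card X = v})"
  have goodSS: "\<forall>S\<in>SS. good S" unfolding SS_def good_def by (auto dest: PiE_mem)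
  have finSS: "finite SS" unfolding SS_def by (rule finite_PiE) auto
  have cardSS: "card SS = (l choose v)^k" unfolding SS_def by (simp add: card_PiE n_subsets)
  have finCS: "finite (CS r S)" for r S unfolding CS_def using finC by simp
  have disj: "card (\<Union>S\<in>SS. CS r S) = (\<Sum>S\<in>SS. card (CS r S))" for r
  proof (rule card_UN_disjoint[OF finSS])
    show "\<forall>S\<in>SS. finite (CS r S)" using finCS by blast
    show "\<forall>S\<in>SS. \<forall>S'\<in>SS. S \<noteq> S' \<longrightarrow> CS r S \<inter> CS r S' = {}"
    proof (intro ballI impI)
      fix S S' assume S: "S \<in> SS" and S': "S' \<in> SS" and ne: "S \<noteq> S'"
      show "CS r S \<inter> CS r S' = {}"
      proof (rule ccontr)
        assume "CS r S \<inter> CS r S' \<noteq> {}"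
        then obtain M where M: "M \<in> CS r S" "M \<in> CS r S'" by blast
        have "S = S'"
        proof (rule PiE_ext)
          show "S \<in> PiE {..<k} (\<lambda>_. {X. X \<subseteq> {..<l} \<and> card X = v})" using S unfolding SS_def .
          show "S' \<in> PiE {..<k} (\<lambda>_. {X. X \<subseteq> {..<l} \<and> card X = v})" using S' unfolding SS_def .
          fix g assume "g \<in> {..<k}"
          then have "g < k" by simp
          then show "S g = S' g" using CS_set[OF _ M(1)] CS_set[OF _ M(2)] goodSS S S' by metis
        qed
        then show False using ne by simp
      qed
    qed
  qed
  have "card C * ((l choose v)^k * (w^v * (m-w)^(l-v))^k) = (\<Sum>S\<in>SS. card C * (w^v * (m-w)^(l-v))^k)"
    using cardSS by simp
  also have "\<dots> = (\<Sum>S\<in>SS. \<Sum>r\<in>RR. card (CS r S))"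
    using count_CS goodSS by simp
  also have "\<dots> = (\<Sum>r\<in>RR. \<Sum>S\<in>SS. card (CS r S))" by (rule sum.swap)
  also have "\<dots> = (\<Sum>r\<in>RR. card (\<Union>S\<in>SS. CS r S))" using disj by simp
  also have "\<dots> \<le> (\<Sum>r\<in>RR. A ((m-1)*l) k (l*w - v) (d - int k * int (min v (l - v))))"
  proof (rule sum_mono)
    fix r assume r: "r \<in> RR"
    show "card (\<Union>S\<in>SS. CS r S) \<le> A ((m-1)*l) k (l*w - v) (d - int k * int (min v (l - v)))"
    proof (rule code_bound[OF r goodSS], intro ballI allI impI)
      fix S S' g assume S: "S \<in> SS" and S': "S' \<in> SS" and g: "g < k"
      have "S g \<in> {X. X \<subseteq> {..<l} \<and> card X = v}" "S' g \<in> {X. X \<subseteq> {..<l} \<and> card X = v}"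
        using S S' g unfolding SS_def by (auto dest: PiE_mem)
      then show "card {t. t < l \<and> (t \<in> S g) \<noteq> (t \<in> S' g)} \<le> 2 * min v (l - v)"
        by (intro sym_diff_bound) auto
    qed
  qed
  also have "\<dots> = m^n * A ((m-1)*l) k (l*w - v) (d - int k * int (min v (l - v)))" using card_RR by simp
  finally show ?thesis .
qed

end



theorem corollary1:
  fixes m n w l v :: nat and d :: int
  assumes "m > 0" "n > 0" "d > 0" "1 \<le> w" "w \<le> m - 1"
    and "l > 0" "l dvd n" "v \<le> l"
  shows "(real (A m n w d) \<le>
           (real m / real w) powr (real n * real v / real l) *
           (real m / (real m - real w)) powr (real n - real n * real v / real l) *
           real (A ((m - 1) * l) (n div l) (l * w - v) d)) \<and>
         (real (A m n w d) \<le>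
           (real m ^ l / (real (l choose v) * real w ^ v * (real m - real w) ^ (l - v))) ^ (n div l) *
           real (A ((m - 1) * l) (n div l) (l * w - v) (d - int (n div l) * int (min v (l - v)))))"
proof -
  define k where "k = n div l"
  have nkl: "n = k*l" using assms(7) unfolding k_def by simp
  have wm: "w < m" using assms(4,5) by linarith
  have m2: "2 \<le> m" using assms(4,5) by linarith
  obtain C where C: "C \<subseteq> cw_space m n w" "C \<noteq> {}"
    "\<forall>x\<in>C. \<forall>y\<in>C. x \<noteq> y \<longrightarrow> int (hdist m n x y) \<ge> 2 * d" "card C = A m n w d"
    using A_ach[of w m n d] wm by auto
  interpret S: setting m n w k l v d C
    by unfold_locales (use m2 nkl assms(4) wm assms(8) C in auto)
  define A1 where "A1 = real (A ((m - 1) * l) k (l * w - v) d)"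
  define A2 where "A2 = real (A ((m - 1) * l) k (l * w - v) (d - int k * int (min v (l - v))))"
  define x where "x = real w"
  define y where "y = real m - real w"
  have xpos: "x > 0" unfolding x_def using assms(4) by simp
  have ypos: "y > 0" unfolding y_def using wm by simp
  have ymw: "real (m - w) = y" unfolding y_def using wm by (simp add: of_nat_diff)
  have mpos: "real m > 0" using m2 by simp
  have nsplit: "n = k*v + k*(l-v)" using nkl assms(8) by (simp add: diff_mult_distrib2)
  have b1: "real (card C) * (x^v * y^(l-v))^k \<le> real m^n * A1"
  proof -
    have "real (card C * (w^v * (m-w)^(l-v))^k) \<le> real (m^n * A ((m-1)*l) k (l*w - v) d)"
      using S.bound1 by (simp only: of_nat_le_iff)
    then show ?thesis unfolding A1_def x_def using ymw by simp
  qed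
  have b2: "real (card C) * ((real (l choose v))^k * (x^v * y^(l-v))^k) \<le> real m^n * A2"
  proof -
    have "real (card C * ((l choose v)^k * (w^v * (m-w)^(l-v))^k)) \<le>
      real (m^n * A ((m-1)*l) k (l*w - v) (d - int k * int (min v (l - v))))"
      using S.bound2 by (simp only: of_nat_le_iff)
    then show ?thesis unfolding A2_def x_def using ymw by simp
  qed
  have Qpos: "(x^v * y^(l-v))^k > 0" using xpos ypos by simp
  have Bpos: "real (l choose v) > 0" using assms(8) by simp
  have first: "real (A m n w d) \<le> (real m / x) powr (real n * real v / real l) *
           (real m / y) powr (real n - real n * real v / real l) * A1"
  proof -
    have e1: "real n * real v / real l = real (k*v)" using nkl assms(6) by simp
    have e2: "real n - real n * real v / real l = real (k*(l-v))"
      using nkl assms(6,8) by (simp add: of_nat_diff diff_mult_distrib2 algebra_simps)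
    have p1: "(real m / x) powr real (k*v) = (real m / x)^(k*v)"
      by (rule powr_realpow) (use mpos xpos in simp)
    have p2: "(real m / y) powr real (k*(l-v)) = (real m / y)^(k*(l-v))"
      by (rule powr_realpow) (use mpos ypos in simp)
    have eqR: "(real m / x)^(k*v) * (real m / y)^(k*(l-v)) * A1 = real m^n * A1 / (x^v * y^(l-v))^k"
    proof -
      have "(x^v * y^(l-v))^k = x^(k*v) * y^(k*(l-v))"
        by (simp add: power_mult_distrib power_mult[symmetric] mult.commute)
      moreover have "real m^n = real m^(k*v) * real m^(k*(l-v))" using nsplit by (simp add: power_add[symmetric])
      ultimately show ?thesis using xpos ypos by (simp add: power_divide)
    qed
    have "real (card C) \<le> real m^n * A1 / (x^v * y^(l-v))^k"
      using b1 Qpos by (simp add: pos_le_divide_eq)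
    then show ?thesis unfolding e2 unfolding e1 unfolding p1 p2 eqR using C(4) by simp
  qed
  have second: "real (A m n w d) \<le> (real m ^ l / (real (l choose v) * x ^ v * y ^ (l - v))) ^ k * A2"
  proof -
    have eqR: "(real m ^ l / (real (l choose v) * x ^ v * y ^ (l - v))) ^ k * A2 =
        real m^n * A2 / ((real (l choose v))^k * (x^v * y^(l-v))^k)"
    proof -
      have "(real m ^ l)^k = real m^n" using nkl by (simp add: power_mult[symmetric] mult.commute)
      then show ?thesis by (simp add: power_divide power_mult_distrib mult.assoc)
    qed
    have "real (card C) \<le> real m^n * A2 / ((real (l choose v))^k * (x^v * y^(l-v))^k)"
      using b2 Qpos Bpos by (simp add: pos_le_divide_eq)
    then show ?thesis unfolding eqR using C(4) by simp
  qed
  show ?thesis using first second unfolding A1_def A2_def x_def y_def k_def by simp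
qed

end
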